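(* For all complex $q$ with $|q|<1$, $$F^{\rm od}_{\rm ed}(q)=\frac{q\,(-q;q^2)_\infty}{1-q}\left(1-\frac{(-q^2;q^2)_\infty}{(-q;q^2)_\infty}\right).$$
   Context: For $n\in\mathbb N_0\cup\{\infty\}$, $(a;q)_n:=\prod_{j=0}^{n-1}(1-aq^j)$. Define $$F^{\rm od}_{\rm ed}(q):=\sum_{n=0}^\infty q^{2n+2}(-q^2;q^2)_n(-q^{2n+3};q^2)_\infty,$$ the generating function for partitions into at least one even part, with even parts distinct, and odd parts distinct and all larger than every even part. *)

theory Defs
  imports "HOL-Analysis.Analysis"
begin

definition qpoch :: "complex \<Rightarrow> complex \<Rightarrow> nat \<Rightarrow> complex" where
  "qpoch a q n = (\<Prod>j<n. 1 - a * q ^ j)"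

definition qpoch_inf :: "complex \<Rightarrow> complex \<Rightarrow> complex" where
  "qpoch_inf a q = (\<Prod>j. 1 - a * q ^ j)"

definition F_od_ed :: "complex \<Rightarrow> complex" where
  "F_od_ed q = (\<Sum>n. q ^ (2*n+2) * qpoch (- (q^2)) (q^2) n * qpoch_inf (- (q^(2*n+3))) (q^2))"

end

theory Submission
  imports Defs
begin

lemma qconv:
  fixes a b :: complex
  assumes "norm b < 1"
  shows "convergent_prod (\<lambda>j. 1 - a * b ^ j)"
proof -
  have "summable (\<lambda>j. norm a * norm b ^ j)"
    using assms by (intro summable_mult summable_geometric) auto
  hence "summable (\<lambda>j. norm ((1 - a * b ^ j) - 1))"
    by (simp add: norm_mult norm_power)
  thus ?thesis
    by (intro abs_convergent_prod_imp_convergent_prod summable_imp_abs_convergent_prod)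
qed

lemma qpoch_inf_LIMSEQ:
  fixes a b :: complex
  assumes "norm b < 1"
  shows "(\<lambda>n. qpoch a b n) \<longlonglongrightarrow> qpoch_inf a b"
  using convergent_prod_LIMSEQ[OF qconv[OF assms, of a]]
  unfolding qpoch_def qpoch_inf_def
  by (simp add: LIMSEQ_lessThan_iff_atMost)

theorem theorem1p1:
  fixes q :: complex
  assumes "norm q < 1"
  shows "F_od_ed q = q * qpoch_inf (- q) (q^2) / (1 - q)
           * (1 - qpoch_inf (- (q^2)) (q^2) / qpoch_inf (- q) (q^2))"
proof -
  have b: "norm (q^2) < 1" using assms
    by (simp add: norm_power power_less_one_iff)
  have nq: "norm q ^ k < 1" if "k > 0" for k
    using assms that by (simp add: power_less_one_iff)
  define P where "P = qpoch_inf (- q) (q^2)"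
  define E where "E = qpoch_inf (- (q^2)) (q^2)"
  define t where "t n = qpoch_inf (- (q^(2*n+1))) (q^2)" for n
  define e where "e n = qpoch (- (q^2)) (q^2) n" for n
  have fnz: "1 - (- q) * (q^2)^j \<noteq> 0" for j
  proof
    assume "1 - (- q) * (q^2)^j = 0"
    hence "q * (q^2)^j = -1" by (simp add: algebra_simps add_eq_0_iff)
    hence "q^(2*j+1) = -1" by (metis power_mult power_Suc add.commute plus_1_eq_Suc)
    hence "norm q ^ (2*j+1) = 1" by (metis norm_minus_cancel norm_one norm_power)
    with nq[of "2*j+1"] show False by simp
  qed
  have Pnz: "P \<noteq> 0" unfolding P_def qpoch_inf_def
    by (rule prodinf_nonzero[OF qconv[OF b] fnz])
  have qpnz: "qpoch (- q) (q^2) n \<noteq> 0" for n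
    unfolding qpoch_def using fnz by (simp add: prod_zero_iff)
  have split: "P = qpoch (- q) (q^2) n * t n" for n
  proof -
    have "P = (\<Prod>i. 1 - (- q) * (q^2)^(i+n)) * qpoch (- q) (q^2) n"
      unfolding P_def qpoch_inf_def qpoch_def
      by (rule prodinf_split_initial_segment[OF qconv[OF b] fnz])
    moreover have "(\<lambda>i. 1 - (- q) * (q^2)^(i+n)) = (\<lambda>i. 1 - (- (q^(2*n+1))) * (q^2)^i)"
      using power_mult[of q 2 n] power_mult[of q n 2]
      by (auto simp: power_add algebra_simps fun_eq_iff)
    ultimately show ?thesis unfolding t_def qpoch_inf_def by simp
  qed
  have tstep: "t n = (1 + q^(2*n+1)) * t (Suc n)" for n
  proof -
    have "qpoch (- q) (q^2) n * t n = qpoch (- q) (q^2) (Suc n) * t (Suc n)"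
      using split by metis
    also have "qpoch (- q) (q^2) (Suc n) = qpoch (- q) (q^2) n * (1 + q^(2*n+1))"
      unfolding qpoch_def using power_mult[of q 2 n] power_mult[of q n 2]
      by (simp add: power_add algebra_simps)
    finally have "qpoch (- q) (q^2) n * t n = qpoch (- q) (q^2) n * ((1 + q^(2*n+1)) * t (Suc n))"
      by (simp add: algebra_simps)
    thus ?thesis using qpnz[of n] mult_left_cancel by blast
  qed
  have estep: "e (Suc n) = e n * (1 + q^(2*n+2))" for n
    unfolding e_def qpoch_def using power_mult[of q 2 n] power_mult[of q n 2]
    by (simp add: power_add algebra_simps power2_eq_square)
  define A where "A n = e n * t n" for n
  have tlim: "t \<longlonglongrightarrow> 1"
  proof -
    have "(\<lambda>n. P / qpoch (- q) (q^2) n) \<longlonglongrightarrow> P / P"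
      using qpoch_inf_LIMSEQ[OF b, of "-q"] Pnz unfolding P_def
      by (intro tendsto_divide tendsto_const) auto
    moreover have "(\<lambda>n. P / qpoch (- q) (q^2) n) = t"
    proof
      fix n show "P / qpoch (- q) (q^2) n = t n" using split[of n] qpnz[of n]
        by (simp add: field_simps)
    qed
    ultimately show ?thesis using Pnz by simp
  qed
  have Alim: "A \<longlonglongrightarrow> E"
    using tendsto_mult[OF qpoch_inf_LIMSEQ[OF b, of "-(q^2)"] tlim]
    unfolding A_def e_def E_def by simp
  have A0: "A 0 = P" unfolding A_def e_def t_def P_def qpoch_def by simp
  have q1: "1 - q \<noteq> 0" using assms by auto
  have termeq: "q ^ (2*n+2) * qpoch (- (q^2)) (q^2) n * qpoch_inf (- (q^(2*n+3))) (q^2)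
      = q / (1 - q) * (A n - A (Suc n))" for n
  proof -
    define X where "X = e n * t (Suc n) * q^(2*n+1)"
    have D: "A n - A (Suc n) = X * (1 - q)"
      unfolding A_def X_def using tstep[of n] estep[of n] by (simp add: algebra_simps)
    have T: "qpoch_inf (- (q^(2*n+3))) (q^2) = t (Suc n)" unfolding t_def
      by (simp add: numeral_3_eq_3 del: power_Suc)
    have "q / (1 - q) * (A n - A (Suc n)) = q * X"
      unfolding D using q1 by (simp add: field_simps)
    also have "q * X = q^(2*n+2) * e n * t (Suc n)"
      unfolding X_def by (simp add: algebra_simps)
    finally show ?thesis using T unfolding e_def by simp
  qed
  have "(\<lambda>n. q / (1 - q) * (A n - A (Suc n))) sums (q / (1 - q) * (A 0 - E))"
    by (intro sums_mult telescope_sums' Alim)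
  hence "F_od_ed q = q / (1 - q) * (P - E)"
    unfolding F_od_ed_def termeq A0 by (simp add: sums_iff)
  also have "\<dots> = q * P / (1 - q) * (1 - E / P)"
    using Pnz q1 by (simp add: field_simps)
  finally show ?thesis unfolding P_def E_def .
qed

end
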